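(* Assume the Continuum Hypothesis. Let $X$ be a real Banach space with $\operatorname{dens} X = \operatorname{dens} X^* = \omega_1$, and let $C \subseteq X$. If $C$ cannot be covered by countably many hyperplanes of $X$, then $C$ contains an overcomplete set for $X$.
   Context: A hyperplane of a Banach space $X$ is a closed linear subspace of codimension one, i.e. the kernel of a non-zero bounded linear functional. $\operatorname{dens}$ denotes the density character. A subset $S$ of a Banach space $X$ with $|S| = \operatorname{dens} X$ is called overcomplete (for $X$) if every subset $\Lambda \subseteq S$ with $|\Lambda| = |S|$ is linearly dense in $X$ (its closed linear span is $X$). *)

theory Defs
  imports "HOL-Analysis.Analysis"
begin

text \<open>Cardinal comparisons use Main's well-order machinery:
  card_of A is the cardinal of A (as a well-order), ordIso = equal cardinality,
  ordLeq = less-or-equal cardinality; cardSuc natLeq is omega_1 (aleph_1).\<close>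

definition omega1 :: "nat set rel" where
  "omega1 = cardSuc natLeq"

definition has_dens :: "'b rel \<Rightarrow> 'a::topological_space itself \<Rightarrow> bool" where
  "has_dens r (_ :: 'a itself) \<longleftrightarrow>
     (\<exists>D::'a set. closure D = UNIV \<and> (card_of D, r) \<in> ordIso) \<and>
     (\<forall>D::'a set. closure D = UNIV \<longrightarrow> (r, card_of D) \<in> ordLeq)"

definition hyperplane :: "'a::real_normed_vector set \<Rightarrow> bool" where
  "hyperplane H \<longleftrightarrow> (\<exists>f::'a \<Rightarrow>\<^sub>L real. f \<noteq> 0 \<and> H = {x. blinfun_apply f x = 0})"

definition overcomplete :: "'a::real_normed_vector set \<Rightarrow> bool" where
  "overcomplete S \<longleftrightarrow> has_dens (card_of S) TYPE('a) \<and>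
     (\<forall>\<Lambda>\<subseteq>S. (card_of \<Lambda>, card_of S) \<in> ordIso \<longrightarrow> closure (span \<Lambda>) = UNIV)"

definition CH :: bool where
  "CH \<longleftrightarrow> (card_of (UNIV :: real set), omega1) \<in> ordIso"

end

theory Submission
  imports Defs
begin
unbundle cardinal_syntax

lemma W_card: "Card_order omega1"
  unfolding omega1_def by (rule cardSuc_Card_order[OF natLeq_Card_order])

lemma W_wo: "Well_order omega1"
  using W_card card_order_on_well_order_on by blast

lemma W_greater: "natLeq <o omega1"
  unfolding omega1_def by (rule cardSuc_greater[OF natLeq_Card_order])

lemma countable_le_natLeq: "countable A \<Longrightarrow> card_of A \<le>o natLeq"
proof -
  assume "countable A"
  then have "card_of A \<le>o card_of (UNIV :: nat set)"
    unfolding countable_def card_of_ordLeq[symmetric] by auto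
  then show ?thesis using card_of_nat ordLeq_ordIso_trans by blast
qed

lemma le_natLeq_countable: "card_of A \<le>o natLeq \<Longrightarrow> countable A"
proof -
  assume "card_of A \<le>o natLeq"
  then have "card_of A \<le>o card_of (UNIV :: nat set)"
    using card_of_nat ordIso_symmetric ordLeq_ordIso_trans by blast
  then show ?thesis
    unfolding countable_def card_of_ordLeq[symmetric] by auto
qed

lemma W_le_uncountable: "omega1 \<le>o card_of A \<Longrightarrow> \<not> countable A"
  using countable_le_natLeq W_greater ordLeq_transitive not_ordLess_ordLeq by blast

lemma W_iso_uncountable: "(card_of A, omega1) \<in> ordIso \<Longrightarrow> \<not> countable A"
  using W_le_uncountable ordIso_symmetric ordIso_iff_ordLeq by blast

lemma uncountable_W_le: "\<not> countable A \<Longrightarrow> omega1 \<le>o card_of A"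
proof -
  assume "\<not> countable A"
  then have "\<not> card_of A \<le>o natLeq" using le_natLeq_countable by blast
  then have "natLeq <o card_of A"
    using not_ordLeq_iff_ordLess natLeq_Well_order card_of_Well_order by blast
  then show ?thesis unfolding omega1_def
    using cardSuc_ordLess_ordLeq[OF natLeq_Card_order card_of_Card_order] by blast
qed

lemma W_underS_countable: "a \<in> Field omega1 \<Longrightarrow> countable (underS omega1 a)"
proof -
  assume a: "a \<in> Field omega1"
  have "card_of (underS omega1 a) <o omega1" by (rule card_of_underS[OF W_card a])
  then have "card_of (underS omega1 a) \<le>o natLeq" unfolding omega1_def
    using cardSuc_ordLeq_ordLess[OF natLeq_Card_order card_of_Card_order] by blast
  then show ?thesis by (rule le_natLeq_countable)
qed

lemma W_field: "(card_of (Field omega1), omega1) \<in> ordIso"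
  by (rule card_of_Field_ordIso[OF W_card])

lemma W_total: "a \<in> Field omega1 \<Longrightarrow> b \<in> Field omega1 \<Longrightarrow> a \<noteq> b \<Longrightarrow> (b, a) \<notin> omega1 \<Longrightarrow> a \<in> underS omega1 b"
proof -
  assume a: "a \<in> Field omega1" and b: "b \<in> Field omega1" and ne: "a \<noteq> b" and nb: "(b, a) \<notin> omega1"
  have "wo_rel omega1" unfolding wo_rel_def using W_wo .
  then have "(a,b) \<in> omega1 \<or> (b,a) \<in> omega1" using wo_rel.TOTALS a b by blast
  then show ?thesis using nb ne unfolding underS_def by blast
qed

lemma has_dens_iso:
  assumes "has_dens r TYPE('a::topological_space)" "(r', r) \<in> ordIso"
  shows "has_dens r' TYPE('a)"
  using assms unfolding has_dens_def
  by (meson ordIso_symmetric ordIso_transitive ordIso_ordLeq_trans)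

lemma dens_card_le:
  assumes CH: CH and dens: "has_dens omega1 TYPE('b::metric_space)"
  shows "card_of (UNIV::'b set) \<le>o omega1"
proof -
  obtain D :: "'b set" where D: "closure D = UNIV" "(card_of D, omega1) \<in> ordIso"
    using dens unfolding has_dens_def by blast
  have R: "(card_of (UNIV::real set), omega1) \<in> ordIso" using CH unfolding CH_def .
  have N: "(card_of (UNIV::nat set set), card_of (UNIV::real set)) \<in> ordIso"
    using nat_sets_eqpoll_reals eqpoll_iff_card_of_ordIso by blast
  have NW: "(card_of (UNIV::nat set set), omega1) \<in> ordIso" using N R ordIso_transitive by blast
  have "(card_of D, card_of (UNIV::nat set set)) \<in> ordIso"
    using D(2) NW ordIso_symmetric ordIso_transitive by blast
  then have "card_of D \<le>o card_of (UNIV::nat set set)" using ordIso_iff_ordLeq by blast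
  then obtain j :: "'b \<Rightarrow> nat set" where j: "inj_on j D"
    using card_of_ordLeq[symmetric, of D "UNIV :: nat set set"] by blast
  have "\<forall>f. \<exists>x. (\<forall>n. x n \<in> D) \<and> x \<longlonglongrightarrow> f"
    using D(1) closure_sequential by blast
  then obtain s where s: "\<And>f n. s f n \<in> D" "\<And>f. s f \<longlonglongrightarrow> f" by metis
  define E where "E f = {prod_encode (n, k) | n k. k \<in> j (s f n)}" for f
  have "inj E"
  proof (rule injI)
    fix f g assume "E f = E g"
    have "j (s f n) = j (s g n)" for n
    proof -
      have "k \<in> j (s f n) \<longleftrightarrow> prod_encode (n,k) \<in> E f" for f k
        unfolding E_def by (auto dest: inj_onD[OF inj_prod_encode, of "(n,k)", simplified])
      then show ?thesis using \<open>E f = E g\<close> by blast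
    qed
    then have "s f n = s g n" for n using j s(1) inj_onD by metis
    then have "s f = s g" by blast
    then show "f = g" using s(2) LIMSEQ_unique by metis
  qed
  then have "card_of (UNIV::'b set) \<le>o card_of (UNIV::nat set set)"
    using card_of_ordLeq[symmetric, of "UNIV::'b set" "UNIV :: nat set set"] by blast
  then show ?thesis using NW ordLeq_ordIso_trans by blast
qed

lemma not_line:
  assumes dens: "has_dens omega1 TYPE('b::real_normed_vector)"
  shows "\<exists>h::'b. h \<notin> range (\<lambda>r. r *\<^sub>R g)"
proof (rule ccontr)
  assume "\<not> ?thesis"
  then have all: "range (\<lambda>r. r *\<^sub>R g) = UNIV" by blast
  define D' where "D' = (\<lambda>r. r *\<^sub>R g) ` \<rat>"
  have cD: "countable D'" unfolding D'_def by (simp add: countable_rat)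
  have "(\<lambda>r. r *\<^sub>R g) ` closure \<rat> \<subseteq> closure D'"
    by (rule image_closure_subset) (auto simp: D'_def intro: closure_subset[THEN subsetD] continuous_intros)
  then have "closure D' = UNIV" using all Rats_closure_real by auto
  then have "omega1 \<le>o card_of D'" using dens unfolding has_dens_def by blast
  then show False using W_le_uncountable cD by blast
qed

lemma kernel_point:
  assumes dens: "has_dens omega1 TYPE('a::real_normed_vector \<Rightarrow>\<^sub>L real)"
  shows "\<exists>f::'a \<Rightarrow>\<^sub>L real. f \<noteq> 0 \<and> blinfun_apply f x = 0"
proof -
  obtain g1 :: "'a \<Rightarrow>\<^sub>L real" where g1: "g1 \<notin> range (\<lambda>r. r *\<^sub>R 0)" using not_line[OF dens] by blast
  then have g1n: "g1 \<noteq> 0" by simp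
  obtain g2 :: "'a \<Rightarrow>\<^sub>L real" where g2: "g2 \<notin> range (\<lambda>r. r *\<^sub>R g1)" using not_line[OF dens] by blast
  show ?thesis
  proof (cases "blinfun_apply g1 x = 0")
    case True then show ?thesis using g1n by blast
  next
    case False
    define f where "f = g2 - (blinfun_apply g2 x / blinfun_apply g1 x) *\<^sub>R g1"
    have "f \<noteq> 0"
    proof
      assume "f = 0"
      then have "g2 = (blinfun_apply g2 x / blinfun_apply g1 x) *\<^sub>R g1" unfolding f_def by simp
      then show False using g2 by blast
    qed
    moreover have "blinfun_apply f x = 0" unfolding f_def using False by (simp add: blinfun.diff_left blinfun.scaleR_left)
    ultimately show ?thesis by blast
  qed
qed

definition gok :: "('a::real_vector \<Rightarrow> real) \<Rightarrow> ('a \<times> real) set \<Rightarrow> bool" where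
 "gok p G \<longleftrightarrow> (\<forall>x a b. (x,a)\<in>G \<longrightarrow> (x,b)\<in>G \<longrightarrow> a=b) \<and>
   (\<forall>x a y b. (x,a)\<in>G \<longrightarrow> (y,b)\<in>G \<longrightarrow> (x+y,a+b)\<in>G) \<and>
   (\<forall>x a c. (x,a)\<in>G \<longrightarrow> (c *\<^sub>R x, c*a) \<in> G) \<and> (\<forall>x a. (x,a)\<in>G \<longrightarrow> a \<le> p x)"

lemma gok_chain:
  assumes "C \<in> chains {G. gok p G \<and> G0 \<subseteq> G}" "C \<noteq> {}"
  shows "gok p (\<Union>C) \<and> G0 \<subseteq> \<Union>C"
proof -
  have ok: "\<And>G. G \<in> C \<Longrightarrow> gok p G" and G0: "\<And>G. G \<in> C \<Longrightarrow> G0 \<subseteq> G"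
    and ch: "\<And>G H. G \<in> C \<Longrightarrow> H \<in> C \<Longrightarrow> G \<subseteq> H \<or> H \<subseteq> G"
    using assms(1) unfolding chains_def chain_subset_def by auto
  have two: "\<exists>K\<in>C. G \<subseteq> K \<and> H \<subseteq> K" if "G \<in> C" "H \<in> C" for G H
    using ch[OF that] that by blast
  show ?thesis
    unfolding gok_def
  proof (intro conjI allI impI)
    fix x a b assume "(x,a) \<in> \<Union>C" "(x,b) \<in> \<Union>C"
    then obtain G H where "G\<in>C" "H\<in>C" "(x,a)\<in>G" "(x,b)\<in>H" by auto
    then obtain K where "K\<in>C" "(x,a)\<in>K" "(x,b)\<in>K" using two by blast
    then show "a = b" using ok[of K] unfolding gok_def by blast
  next
    fix x a y b assume "(x,a) \<in> \<Union>C" "(y,b) \<in> \<Union>C"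
    then obtain G H where "G\<in>C" "H\<in>C" "(x,a)\<in>G" "(y,b)\<in>H" by auto
    then obtain K where "K\<in>C" "(x,a)\<in>K" "(y,b)\<in>K" using two by blast
    then show "(x+y,a+b) \<in> \<Union>C" using ok[of K] unfolding gok_def by blast
  next
    fix x a c assume "(x,a) \<in> \<Union>C"
    then obtain K where "K\<in>C" "(x,a)\<in>K" by auto
    then show "(c *\<^sub>R x, c*a) \<in> \<Union>C" using ok[of K] unfolding gok_def by blast
  next
    fix x a assume "(x,a) \<in> \<Union>C"
    then obtain K where "K\<in>C" "(x,a)\<in>K" by auto
    then show "a \<le> p x" using ok[of K] unfolding gok_def by blast
  next
    show "G0 \<subseteq> \<Union>C" using G0 assms(2) by blast
  qed
qed

lemma gok_extend:
  fixes p :: "'a::real_vector \<Rightarrow> real"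
  assumes p_add: "\<And>x y. p (x+y) \<le> p x + p y"
    and p_scale: "\<And>x c. c > 0 \<Longrightarrow> p (c *\<^sub>R x) = c * p x"
    and ok: "gok p G" and ne: "G \<noteq> {}" and x0: "x0 \<notin> fst ` G"
  shows "\<exists>G'. gok p G' \<and> G \<subseteq> G' \<and> G' \<noteq> G"
proof -
  have fnc: "\<And>x a b. (x,a)\<in>G \<Longrightarrow> (x,b)\<in>G \<Longrightarrow> a=b"
    and add: "\<And>x a y b. (x,a)\<in>G \<Longrightarrow> (y,b)\<in>G \<Longrightarrow> (x+y,a+b)\<in>G"
    and scl: "\<And>x a c. (x,a)\<in>G \<Longrightarrow> (c *\<^sub>R x, c*a) \<in> G"
    and dom: "\<And>x a. (x,a)\<in>G \<Longrightarrow> a \<le> p x"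
    using ok unfolding gok_def by blast+
  define L where "L = {a - p (y - x0) | y a. (y,a) \<in> G}"
  define c where "c = Sup L"
  have key: "a - p (y - x0) \<le> p (z + x0) - b" if "(y,a)\<in>G" "(z,b)\<in>G" for y a z b
  proof -
    have "a + b \<le> p (y + z)" using dom[OF add[OF that]] .
    also have "y + z = (y - x0) + (z + x0)" by simp
    finally show ?thesis using p_add[of "y - x0" "z + x0"] by linarith
  qed
  obtain g0 where "g0 \<in> G" using ne by blast
  then have z0: "(0,0) \<in> G" using scl[of "fst g0" "snd g0" 0] by simp
  have Lne: "L \<noteq> {}" using z0 unfolding L_def by blast
  have Lbd: "bdd_above L" unfolding L_def bdd_above_def
    using key[OF _ z0] by fastforce
  have c_ge: "a - p (y - x0) \<le> c" if "(y,a)\<in>G" for y a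
    unfolding c_def by (rule cSup_upper[OF _ Lbd]) (use that L_def in blast)
  have c_le: "c \<le> p (z + x0) - b" if "(z,b)\<in>G" for z b
    unfolding c_def by (rule cSup_least[OF Lne]) (use key[OF _ that] L_def in blast)
  have domx: "a + t * c \<le> p (y + t *\<^sub>R x0)" if "(y,a)\<in>G" for y a t
  proof (cases "t > 0")
    case True
    have "c \<le> p ((1/t) *\<^sub>R y + x0) - (1/t) * a" using c_le[OF scl[OF that, of "1/t"]] .
    then have "t * c \<le> t * (p ((1/t) *\<^sub>R y + x0) - (1/t) * a)" using True
      by (simp add: mult_left_mono)
    also have "\<dots> = t * p ((1/t) *\<^sub>R y + x0) - a" using True by (simp add: right_diff_distrib)
    also have "t * p ((1/t) *\<^sub>R y + x0) = p (t *\<^sub>R ((1/t) *\<^sub>R y + x0))" using p_scale True by simp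
    also have "t *\<^sub>R ((1/t) *\<^sub>R y + x0) = y + t *\<^sub>R x0" using True by (simp add: scaleR_add_right)
    finally show ?thesis by linarith
  next
    case False
    show ?thesis
    proof (cases "t = 0")
      case True then show ?thesis using dom[OF that] by simp
    next
      case f2: False
      define s where "s = - t"
      have s: "s > 0" using False f2 s_def by linarith
      have "(1/s) * a - p ((1/s) *\<^sub>R y - x0) \<le> c" using c_ge[OF scl[OF that, of "1/s"]] .
      then have "s * ((1/s) * a - p ((1/s) *\<^sub>R y - x0)) \<le> s * c" using s
        by (simp add: mult_left_mono)
      then have "a - s * p ((1/s) *\<^sub>R y - x0) \<le> s * c" using s by (simp add: right_diff_distrib)
      also have "s * p ((1/s) *\<^sub>R y - x0) = p (s *\<^sub>R ((1/s) *\<^sub>R y - x0))" using p_scale s by simp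
      also have "s *\<^sub>R ((1/s) *\<^sub>R y - x0) = y + t *\<^sub>R x0" using s s_def by (simp add: scaleR_diff_right)
      finally show ?thesis using s_def by simp
    qed
  qed
  define G' where "G' = {(y + t *\<^sub>R x0, a + t * c) | y a t. (y,a) \<in> G}"
  have uniq: "t = t' \<and> y = y' \<and> a = a'"
    if "(y,a)\<in>G" "(y',a')\<in>G" "y + t *\<^sub>R x0 = y' + t' *\<^sub>R x0" for y a y' a' t t'
  proof -
    have d: "(y' - y, a' - a) \<in> G" using add[OF that(2) scl[OF that(1), of "-1"]] by simp
    have tt: "t = t'"
    proof (rule ccontr)
      assume "t \<noteq> t'"
      have "(t - t') *\<^sub>R x0 = y' - y" using that(3)
        by (metis add_diff_cancel_left add_diff_cancel_right scaleR_left_diff_distrib)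
      then have "x0 = (1/(t - t')) *\<^sub>R (y' - y)" using \<open>t \<noteq> t'\<close>
        by (simp add: eq_vector_fraction_iff)
      then have "(x0, (1/(t - t')) * (a' - a)) \<in> G" using scl[OF d, of "1/(t - t')"] by simp
      then show False using x0 by (metis fst_conv image_eqI)
    qed
    then have "y = y'" using that(3) by simp
    then show ?thesis using tt fnc that by blast
  qed
  have G'I: "(y + t *\<^sub>R x0, a + t * c) \<in> G'" if "(y,a)\<in>G" for y a t
    unfolding G'_def using that by blast
  have G'E: "\<exists>y a t. z = (y + t *\<^sub>R x0, a + t * c) \<and> (y,a)\<in>G" if "z \<in> G'" for z
    using that unfolding G'_def by blast
  have "gok p G'" unfolding gok_def
  proof (intro conjI allI impI)
    fix x a b assume A: "(x,a)\<in>G'" "(x,b)\<in>G'"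
    obtain y1 a1 t1 where 1: "(y1,a1)\<in>G" "x = y1 + t1 *\<^sub>R x0" "a = a1 + t1 * c"
      using G'E[OF A(1)] by auto
    obtain y2 a2 t2 where 2: "(y2,a2)\<in>G" "x = y2 + t2 *\<^sub>R x0" "b = a2 + t2 * c"
      using G'E[OF A(2)] by auto
    have "t1 = t2 \<and> y1 = y2 \<and> a1 = a2" using uniq[OF 1(1) 2(1), of t1 t2] 1(2) 2(2) by simp
    then show "a = b" using 1 2 by simp
  next
    fix x a y b assume A: "(x,a)\<in>G'" "(y,b)\<in>G'"
    obtain y1 a1 t1 where 1: "(y1,a1)\<in>G" "x = y1 + t1 *\<^sub>R x0" "a = a1 + t1 * c"
      using G'E[OF A(1)] by auto
    obtain y2 a2 t2 where 2: "(y2,a2)\<in>G" "y = y2 + t2 *\<^sub>R x0" "b = a2 + t2 * c"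
      using G'E[OF A(2)] by auto
    have eq: "(x + y, a + b) = ((y1 + y2) + (t1 + t2) *\<^sub>R x0, (a1 + a2) + (t1 + t2) * c)"
      using 1 2 by (simp add: algebra_simps)
    show "(x+y, a+b) \<in> G'" unfolding eq by (rule G'I[OF add[OF 1(1) 2(1)]])
  next
    fix x a r assume A: "(x,a)\<in>G'"
    obtain y1 a1 t1 where 1: "(y1,a1)\<in>G" "x = y1 + t1 *\<^sub>R x0" "a = a1 + t1 * c"
      using G'E[OF A(1)] by auto
    have eq: "(r *\<^sub>R x, r * a) = (r *\<^sub>R y1 + (r * t1) *\<^sub>R x0, r * a1 + (r * t1) * c)"
      using 1 by (simp add: algebra_simps)
    show "(r *\<^sub>R x, r * a) \<in> G'" unfolding eq by (rule G'I[OF scl[OF 1(1)]])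
  next
    fix x a assume A: "(x,a)\<in>G'"
    obtain y1 a1 t1 where 1: "(y1,a1)\<in>G" "x = y1 + t1 *\<^sub>R x0" "a = a1 + t1 * c"
      using G'E[OF A(1)] by auto
    show "a \<le> p x" using domx[OF 1(1)] 1 by simp
  qed
  moreover have "G \<subseteq> G'"
  proof
    fix z assume "z \<in> G"
    then show "z \<in> G'" using G'I[of "fst z" "snd z" 0] by simp
  qed
  moreover have "(x0, c) \<in> G'" using G'I[OF z0, of 1] by simp
  then have "G' \<noteq> G" using x0 by (metis fst_conv image_eqI)
  ultimately show ?thesis by blast
qed

lemma HB_graph:
  fixes p :: "'a::real_vector \<Rightarrow> real"
  assumes p_add: "\<And>x y. p (x+y) \<le> p x + p y"
    and p_scale: "\<And>x c. c > 0 \<Longrightarrow> p (c *\<^sub>R x) = c * p x"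
    and ok0: "gok p G0" and ne: "G0 \<noteq> {}"
  shows "\<exists>F. linear F \<and> (\<forall>x a. (x,a)\<in>G0 \<longrightarrow> F x = a) \<and> (\<forall>x. F x \<le> p x)"
proof -
  let ?A = "{G. gok p G \<and> G0 \<subseteq> G}"
  have ch: "\<forall>C\<in>chains ?A. \<exists>U\<in>?A. \<forall>X\<in>C. X \<subseteq> U"
  proof
    fix C assume C: "C \<in> chains ?A"
    show "\<exists>U\<in>?A. \<forall>X\<in>C. X \<subseteq> U"
    proof (cases "C = {}")
      case True then show ?thesis by (intro bexI[of _ G0]) (use ok0 in auto)
    next
      case False
      have "gok p (\<Union>C) \<and> G0 \<subseteq> \<Union>C" by (rule gok_chain[OF C False])
      then show ?thesis by (intro bexI[of _ "\<Union>C"]) auto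
    qed
  qed
  have "\<exists>M\<in>?A. \<forall>X\<in>?A. M \<subseteq> X \<longrightarrow> X = M" by (rule Zorn_Lemma2[OF ch])
  then obtain M where M: "M \<in> ?A" and maxx: "\<forall>X\<in>?A. M \<subseteq> X \<longrightarrow> X = M" by blast
  have max: "X = M" if "X \<in> ?A" "M \<subseteq> X" for X using maxx that by blast
  have okM: "gok p M" and G0M: "G0 \<subseteq> M" using M by auto
  have neM: "M \<noteq> {}" using G0M ne by blast
  have full: "x \<in> fst ` M" for x
  proof (rule ccontr)
    assume "x \<notin> fst ` M"
    then obtain G' where "gok p G'" "M \<subseteq> G'" "G' \<noteq> M"
      using gok_extend[OF p_add p_scale okM neM] by blast
    moreover have "G' \<in> ?A" using \<open>gok p G'\<close> \<open>M \<subseteq> G'\<close> G0M by simp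
    ultimately show False using max[of G'] by simp
  qed
  have fnc: "\<And>x a b. (x,a)\<in>M \<Longrightarrow> (x,b)\<in>M \<Longrightarrow> a=b"
    and add: "\<And>x a y b. (x,a)\<in>M \<Longrightarrow> (y,b)\<in>M \<Longrightarrow> (x+y,a+b)\<in>M"
    and scl: "\<And>x a c. (x,a)\<in>M \<Longrightarrow> (c *\<^sub>R x, c*a) \<in> M"
    and dom: "\<And>x a. (x,a)\<in>M \<Longrightarrow> a \<le> p x"
    using okM unfolding gok_def by blast+
  define F where "F x = (THE a. (x,a) \<in> M)" for x
  have FM: "(x, F x) \<in> M" for x
  proof -
    obtain a where a: "(x,a) \<in> M" using full[of x] by force
    have "(THE a. (x,a) \<in> M) = a" by (rule the_equality) (use fnc a in blast)+
    then show ?thesis using a F_def by simp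
  qed
  have Feq: "F x = a" if "(x,a) \<in> M" for x a using fnc[OF that FM] by simp
  have "linear F"
  proof (rule linearI)
    fix x y show "F (x + y) = F x + F y" using Feq[OF add[OF FM FM]] .
  next
    fix c x show "F (c *\<^sub>R x) = c *\<^sub>R F x" using Feq[OF scl[OF FM]] by simp
  qed
  moreover have "\<forall>x a. (x,a)\<in>G0 \<longrightarrow> F x = a" using Feq G0M by blast
  moreover have "\<forall>x. F x \<le> p x" using dom[OF FM] by blast
  ultimately show ?thesis by blast
qed

lemma sep_functional:
  fixes M :: "'a::real_normed_vector set"
  assumes sub: "subspace M" and x0: "x0 \<notin> closure M"
  shows "\<exists>f::'a \<Rightarrow>\<^sub>L real. f \<noteq> 0 \<and> (\<forall>m\<in>M. blinfun_apply f m = 0)"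
proof -
  have M0: "0 \<in> M" using sub subspace_0 by blast
  define d where "d = infdist x0 (closure M)"
  have dpos: "d > 0" unfolding d_def
    by (rule infdist_pos_not_in_closed) (use M0 x0 closure_subset in auto)
  have x0M: "x0 \<notin> M" using x0 closure_subset by blast
  define p where "p x = norm x / d" for x :: 'a
  have p_add: "p (x+y) \<le> p x + p y" for x y
    unfolding p_def using dpos norm_triangle_ineq[of x y] by (metis add_divide_distrib divide_right_mono order_less_imp_le)
  have p_scale: "p (c *\<^sub>R x) = c * p x" if "c > 0" for x c
    unfolding p_def using that by simp
  define G0 where "G0 = {(m + t *\<^sub>R x0, t) | m t. m \<in> M}"
  have uniq: "t = t'" if "m \<in> M" "m' \<in> M" "m + t *\<^sub>R x0 = m' + t' *\<^sub>R x0" for m m' t t'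
  proof (rule ccontr)
    assume tt: "t \<noteq> t'"
    have "(t - t') *\<^sub>R x0 = m' - m" using that(3)
      by (metis add_diff_cancel_left add_diff_cancel_right scaleR_left_diff_distrib)
    then have "x0 = (1/(t - t')) *\<^sub>R (m' - m)" using tt by (simp add: eq_vector_fraction_iff)
    moreover have "(1/(t - t')) *\<^sub>R (m' - m) \<in> M"
      using that(1,2) sub by (simp add: subspace_scale subspace_diff)
    ultimately show False using x0M by simp
  qed
  have bound: "t \<le> p (m + t *\<^sub>R x0)" if "m \<in> M" for m t
  proof (cases "t > 0")
    case False
    then show ?thesis unfolding p_def using dpos by (smt (verit) divide_nonneg_pos norm_ge_zero)
  next
    case True
    have mm: "- ((1/t) *\<^sub>R m) \<in> M" using that sub by (simp add: subspace_scale subspace_neg)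
    have "d \<le> dist x0 (- ((1/t) *\<^sub>R m))" unfolding d_def
      by (rule infdist_le) (use mm closure_subset in blast)
    also have "\<dots> = norm (x0 + (1/t) *\<^sub>R m)" by (simp add: dist_norm)
    finally have "t * d \<le> t * norm (x0 + (1/t) *\<^sub>R m)" using True by simp
    also have "\<dots> = norm (t *\<^sub>R (x0 + (1/t) *\<^sub>R m))" using True by simp
    also have "t *\<^sub>R (x0 + (1/t) *\<^sub>R m) = m + t *\<^sub>R x0" using True by (simp add: scaleR_add_right)
    finally show ?thesis unfolding p_def using dpos by (simp add: le_divide_eq)
  qed
  have ok0: "gok p G0" unfolding gok_def
  proof (intro conjI allI impI)
    fix x a b assume "(x,a)\<in>G0" "(x,b)\<in>G0"
    then obtain m m' where "m\<in>M" "m'\<in>M" "x = m + a *\<^sub>R x0" "x = m' + b *\<^sub>R x0"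
      unfolding G0_def by blast
    then show "a = b" using uniq by metis
  next
    fix x a y b assume "(x,a)\<in>G0" "(y,b)\<in>G0"
    then obtain m m' where "m\<in>M" "m'\<in>M" "x = m + a *\<^sub>R x0" "y = m' + b *\<^sub>R x0"
      unfolding G0_def by blast
    moreover have "m + m' \<in> M" using calculation sub by (simp add: subspace_add)
    moreover have "x + y = (m + m') + (a + b) *\<^sub>R x0" using calculation by (simp add: algebra_simps)
    ultimately show "(x+y, a+b) \<in> G0" unfolding G0_def by blast
  next
    fix x a c assume "(x,a)\<in>G0"
    then obtain m where "m\<in>M" "x = m + a *\<^sub>R x0"
      unfolding G0_def by blast
    moreover have "c *\<^sub>R m \<in> M" using calculation sub by (simp add: subspace_scale)
    moreover have "c *\<^sub>R x = c *\<^sub>R m + (c * a) *\<^sub>R x0" using calculation by (simp add: algebra_simps)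
    ultimately show "(c *\<^sub>R x, c * a) \<in> G0" unfolding G0_def by blast
  next
    fix x a assume "(x,a)\<in>G0"
    then obtain m where "m\<in>M" "x = m + a *\<^sub>R x0"
      unfolding G0_def by blast
    then show "a \<le> p x" using bound by simp
  qed
  have "(0 + 0 *\<^sub>R x0, 0) \<in> G0" unfolding G0_def using M0 by blast
  then have ne: "G0 \<noteq> {}" by blast
  obtain F where F: "linear F" "\<And>x a. (x,a)\<in>G0 \<Longrightarrow> F x = a" "\<And>x. F x \<le> p x"
    using HB_graph[OF p_add p_scale ok0 ne] by blast
  have Fneg: "- F x \<le> p x" for x
  proof -
    have "F (- x) \<le> p (- x)" by (rule F(3))
    moreover have "F (- x) = - F x" using F(1) linear_neg by blast
    moreover have "p (- x) = p x" unfolding p_def by simp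
    ultimately show ?thesis by simp
  qed
  have bl: "bounded_linear F"
  proof (rule bounded_linear_intro[where K = "1/d"])
    fix x y show "F (x + y) = F x + F y" using F(1) linear_add by blast
  next
    fix r x show "F (r *\<^sub>R x) = r *\<^sub>R F x" using F(1) linear_scale by blast
  next
    fix x show "norm (F x) \<le> norm x * (1/d)" using F(3)[of x] Fneg[of x] unfolding p_def by simp
  qed
  have Fx0: "F x0 = 1" using F(2)[of x0 1] M0 unfolding G0_def by force
  have FM: "F m = 0" if "m \<in> M" for m using F(2)[of m 0] that unfolding G0_def by force
  show ?thesis
  proof (intro exI conjI)
    show "Blinfun F \<noteq> 0" using Fx0 bounded_linear_Blinfun_apply[OF bl]
      by (metis blinfun.zero_left zero_neq_one) 
    show "\<forall>m\<in>M. blinfun_apply (Blinfun F) m = 0" using FM bounded_linear_Blinfun_apply[OF bl] by simp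
  qed
qed


theorem theorem3p1:
  fixes C :: "'a::banach set"
  assumes CH: "CH"
    and densX: "has_dens omega1 TYPE('a)"
    and densXstar: "has_dens omega1 TYPE('a \<Rightarrow>\<^sub>L real)"
    and not_covered: "\<not> (\<exists>\<H>. countable \<H> \<and> (\<forall>H\<in>\<H>. hyperplane H) \<and> C \<subseteq> \<Union>\<H>)"
  shows "\<exists>S\<subseteq>C. overcomplete S"
proof -
  define F where "F = {f::'a \<Rightarrow>\<^sub>L real. f \<noteq> 0}"
  obtain f0 :: "'a \<Rightarrow>\<^sub>L real" where "f0 \<noteq> 0" using kernel_point[OF densXstar] by blast
  then have Fne: "F \<noteq> {}" unfolding F_def by blast
  have c1: "card_of F \<le>o card_of (UNIV :: ('a \<Rightarrow>\<^sub>L real) set)" by (rule card_of_mono1) simp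
  have c2: "card_of (UNIV :: ('a \<Rightarrow>\<^sub>L real) set) \<le>o omega1" by (rule dens_card_le[OF CH densXstar])
  have c3: "(omega1, card_of (Field omega1)) \<in> ordIso" using W_field by (rule ordIso_symmetric)
  have "card_of F \<le>o card_of (Field omega1)"
    by (rule ordLeq_ordIso_trans[OF ordLeq_transitive[OF c1 c2] c3])
  then have "\<exists>g. g ` Field omega1 = F" by (rule iffD2[OF card_of_ordLeq2[OF Fne]])
  then obtain \<phi> where \<phi>: "\<phi> ` Field omega1 = F" by (elim exE)
  define U where "U \<alpha> = insert \<alpha> (underS omega1 \<alpha>)" for \<alpha>
  have UF: "U \<alpha> \<subseteq> Field omega1" if "\<alpha> \<in> Field omega1" for \<alpha>
    using that unfolding U_def underS_def by (auto intro: FieldI1)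
  have ex: "\<exists>x\<in>C. \<forall>\<beta>\<in>U \<alpha>. blinfun_apply (\<phi> \<beta>) x \<noteq> 0" if a: "\<alpha> \<in> Field omega1" for \<alpha>
  proof -
    let ?H = "(\<lambda>\<beta>. {x. blinfun_apply (\<phi> \<beta>) x = 0}) ` U \<alpha>"
    have "countable (U \<alpha>)" unfolding U_def using W_underS_countable[OF a] by simp
    then have "countable ?H" by simp
    moreover have "\<forall>H\<in>?H. hyperplane H"
    proof
      fix H assume "H \<in> ?H"
      then obtain \<beta> where b: "\<beta> \<in> U \<alpha>" "H = {x. blinfun_apply (\<phi> \<beta>) x = 0}" by blast
      have "\<phi> \<beta> \<in> F" using \<phi> UF[OF a] b(1) by blast
      then show "hyperplane H" unfolding hyperplane_def F_def using b(2) by blast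
    qed
    moreover have nc: "\<And>\<H>. countable \<H> \<Longrightarrow> (\<forall>H\<in>\<H>. hyperplane H) \<Longrightarrow> \<not> C \<subseteq> \<Union>\<H>"
      using not_covered by blast
    ultimately have "\<not> C \<subseteq> \<Union>?H" by blast
    then obtain x where x: "x \<in> C" "x \<notin> \<Union>?H" by blast
    show ?thesis
    proof (rule bexI[OF _ x(1)])
      show "\<forall>\<beta>\<in>U \<alpha>. blinfun_apply (\<phi> \<beta>) x \<noteq> 0" using x(2) by blast
    qed
  qed
  define xs where "xs \<alpha> = (SOME x. x \<in> C \<and> (\<forall>\<beta>\<in>U \<alpha>. blinfun_apply (\<phi> \<beta>) x \<noteq> 0))" for \<alpha>
  have xs: "xs \<alpha> \<in> C \<and> (\<forall>\<beta>\<in>U \<alpha>. blinfun_apply (\<phi> \<beta>) (xs \<alpha>) \<noteq> 0)" if "\<alpha> \<in> Field omega1" for \<alpha>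
    unfolding xs_def by (rule someI_ex) (use ex[OF that] in blast)
  define S where "S = xs ` Field omega1"
  have SC: "S \<subseteq> C" unfolding S_def using xs by blast
  have cnt: "countable {\<alpha> \<in> Field omega1. blinfun_apply f (xs \<alpha>) = 0}" if f: "f \<noteq> 0" for f :: "'a \<Rightarrow>\<^sub>L real"
  proof -
    have "f \<in> F" using f unfolding F_def by simp
    then have "f \<in> \<phi> ` Field omega1" using \<phi> by simp
    then obtain \<beta> where b: "\<beta> \<in> Field omega1" "\<phi> \<beta> = f" by (elim imageE) simp
    have "{\<alpha> \<in> Field omega1. blinfun_apply f (xs \<alpha>) = 0} \<subseteq> underS omega1 \<beta>"
    proof
      fix \<alpha> assume "\<alpha> \<in> {\<alpha> \<in> Field omega1. blinfun_apply f (xs \<alpha>) = 0}"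
      then have a: "\<alpha> \<in> Field omega1" "blinfun_apply f (xs \<alpha>) = 0" by auto
      have "\<beta> \<notin> U \<alpha>"
      proof
        assume "\<beta> \<in> U \<alpha>"
        then have "blinfun_apply (\<phi> \<beta>) (xs \<alpha>) \<noteq> 0" using xs[OF a(1)] by blast
        then show False using a(2) b(2) by simp
      qed
      then have "\<alpha> \<noteq> \<beta>" "(\<beta>, \<alpha>) \<notin> omega1" unfolding U_def underS_def by auto
      then show "\<alpha> \<in> underS omega1 \<beta>" using W_total[OF a(1) b(1)] by blast
    qed
    then show ?thesis using W_underS_countable[OF b(1)] countable_subset by blast
  qed
  have cntS: "countable {s \<in> S. blinfun_apply f s = 0}" if f: "f \<noteq> 0" for f :: "'a \<Rightarrow>\<^sub>L real"
  proof -
    have "{s \<in> S. blinfun_apply f s = 0} \<subseteq> xs ` {\<alpha> \<in> Field omega1. blinfun_apply f (xs \<alpha>) = 0}"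
    proof
      fix s assume "s \<in> {s \<in> S. blinfun_apply f s = 0}"
      then obtain \<alpha> where "\<alpha> \<in> Field omega1" "s = xs \<alpha>" "blinfun_apply f s = 0"
        unfolding S_def by auto
      then show "s \<in> xs ` {\<alpha> \<in> Field omega1. blinfun_apply f (xs \<alpha>) = 0}" by auto
    qed
    moreover have "countable (xs ` {\<alpha> \<in> Field omega1. blinfun_apply f (xs \<alpha>) = 0})"
      using cnt[OF f] by (rule countable_image)
    ultimately show ?thesis by (rule countable_subset)
  qed
  have Sunc: "\<not> countable S"
  proof
    assume cS: "countable S"
    have "Field omega1 \<subseteq> (\<Union>s\<in>S. {\<alpha> \<in> Field omega1. xs \<alpha> = s})" unfolding S_def by auto
    moreover have "countable (\<Union>s\<in>S. {\<alpha> \<in> Field omega1. xs \<alpha> = s})"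
    proof (rule countable_UN[OF cS])
      fix s assume "s \<in> S"
      obtain f :: "'a \<Rightarrow>\<^sub>L real" where f: "f \<noteq> 0" "blinfun_apply f s = 0"
        using kernel_point[OF densXstar] by blast
      have "{\<alpha> \<in> Field omega1. xs \<alpha> = s} \<subseteq> {\<alpha> \<in> Field omega1. blinfun_apply f (xs \<alpha>) = 0}"
        using f by auto
      then show "countable {\<alpha> \<in> Field omega1. xs \<alpha> = s}" using cnt[OF f(1)] countable_subset by blast
    qed
    ultimately have "countable (Field omega1)" using countable_subset by blast
    then show False using W_iso_uncountable[OF W_field] by blast
  qed
  have SW: "(card_of S, omega1) \<in> ordIso"
  proof -
    have "card_of S \<le>o card_of (Field omega1)" unfolding S_def by (rule card_of_image)
    then have "card_of S \<le>o omega1" using W_field ordLeq_ordIso_trans by blast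
    moreover have "omega1 \<le>o card_of S" by (rule uncountable_W_le[OF Sunc])
    ultimately show ?thesis using ordIso_iff_ordLeq by blast
  qed
  have "overcomplete S" unfolding overcomplete_def
  proof (intro conjI allI impI)
    show "has_dens (card_of S) TYPE('a)" by (rule has_dens_iso[OF densX SW])
  next
    fix \<Lambda> assume L: "\<Lambda> \<subseteq> S" "(card_of \<Lambda>, card_of S) \<in> ordIso"
    show "closure (span \<Lambda>) = UNIV"
    proof (rule ccontr)
      assume "closure (span \<Lambda>) \<noteq> UNIV"
      then obtain x0 where x0: "x0 \<notin> closure (span \<Lambda>)" by blast
      obtain f :: "'a \<Rightarrow>\<^sub>L real" where f: "f \<noteq> 0" "\<forall>m\<in>span \<Lambda>. blinfun_apply f m = 0"
        using sep_functional[OF subspace_span x0] by blast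
      have "\<Lambda> \<subseteq> {s \<in> S. blinfun_apply f s = 0}" using L(1) f(2) span_superset by blast
      then have "countable \<Lambda>" using cntS[OF f(1)] countable_subset by blast
      moreover have "(card_of \<Lambda>, omega1) \<in> ordIso" using L(2) SW ordIso_transitive by blast
      ultimately show False using W_iso_uncountable by blast
    qed
  qed
  then show ?thesis using SC by blast
qed

end
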